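(* Run the mechanism BFM-VM described in the context with arbitrary $B>0$, $\alpha>1$, $\ell\in\{1,2\}$, with all sellers behaving truthfully. Then $v(S^* )+\rho_1\ge\rho_{M-1}$, and consequently $$\frac{\alpha^2}{\alpha-1}\,v(S^* )\ \ge\ \rho_M.$$
   Context: Setting. $\mathcal{N}$ is a finite set of $n$ sellers. The valuation $v:2^{\mathcal{N}}\to\mathbb{R}_{\ge 0}$ satisfies $v(\emptyset)=0$ and is submodular (for $X\subseteq Y\subseteq\mathcal{N}$ and $u\notin Y$, $v(u\mid Y)\le v(u\mid X)$), not necessarily monotone, where $v(S\mid T)=v(S\cup T)-v(T)$, $v(u\mid T)=v(\{u\}\mid T)$, $v(u)=v(\{u\})$. Each seller $u$ has a private cost $c(u)\ge 0$. $B>0$ is the budget, $[\ell]=\{1,\dots,\ell\}$. Sellers behave truthfully: a seller $u$ offered price $q$ accepts iff $c(u)\le q$. Mechanism BFM-VM (inputs $B$, $\alpha>1$, $\ell\in\{1,2\}$): 1. Offer every seller the price $B$; let $R$ be the set of sellers who accept, and set $p(u)=B$ for $u\in R$. 2. Set $t=1$, $\rho_1=\max_{u\in R}v(u)$, $S_{1,1}=\{u_0\}$ for some $u_0\in\arg\max_{u\in R}v(u)$, and (if $\ell=2$) $S_{2,1}=\emptyset$. 3. Repeat rounds: set $t\leftarrow t+1$, $\rho_t=\alpha\rho_{t-1}$, $S_{i,t}=\emptyset$ for $i\in[\ell]$. Process the sellers $u\in R\setminus\bigcup_{i=1}^{\ell}S_{i,t-1}$ one at a time in a fixed order. For each such $u$: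 pick $j\in\arg\max_{i\in[\ell]}v(u\mid S_{i,t})$ (current contents); update $p(u)\leftarrow\min\{p(u),\ v(u\mid S_{j,t})/(\rho_t/B)\}$ and offer $p(u)$ to $u$. If $u$ accepts: if $v(S_{j,t}\cup\{u\})>\rho_t$, end the round immediately; otherwise add $u$ to $S_{j,t}$. If $u$ rejects, remove $u$ from $R$. After the round, stop if $R\setminus\bigcup_{i=1}^{\ell}(S_{i,t-1}\cup S_{i,t})=\emptyset$; otherwise start another round. 4. Let $M$ be the final value of $t$. Output $S^*\in\arg\max_{A\in\{S_{i,t}: i\in[\ell],\ t\in\{M-1,M\}\}}v(A)$, paying each $u\in S^*$ its current price $p(u)$. Notation: $\rho_t$ is the threshold of round $t$ ($\rho_t=\alpha^{t-1}\rho_1$). *)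

theory Defs
  imports Complex_Main
begin

definition marg :: "('a set \<Rightarrow> real) \<Rightarrow> 'a \<Rightarrow> 'a set \<Rightarrow> real" where
  "marg v u S = v (insert u S) - v S"

definition submodular_on :: "'a set \<Rightarrow> ('a set \<Rightarrow> real) \<Rightarrow> bool" where
  "submodular_on N v \<longleftrightarrow>
     (\<forall>X Y u. X \<subseteq> Y \<longrightarrow> Y \<subseteq> N \<longrightarrow> u \<in> N \<longrightarrow> u \<notin> Y \<longrightarrow> marg v u Y \<le> marg v u X)"

text \<open>Processing of one round of BFM-VM (step 3).
  Arguments: list of sellers still to be processed (in the fixed order), current sets S i
  (i in {1..l}), current R, current prices p; then the resulting sets, R and prices at the
  end of the round.  The choice of j among the maximisers is arbitrary (nondeterministic).\<close>
inductive bfm_round ::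
  "('a set \<Rightarrow> real) \<Rightarrow> ('a \<Rightarrow> real) \<Rightarrow> real \<Rightarrow> nat \<Rightarrow> real \<Rightarrow>
   'a list \<Rightarrow> (nat \<Rightarrow> 'a set) \<Rightarrow> 'a set \<Rightarrow> ('a \<Rightarrow> real) \<Rightarrow>
   (nat \<Rightarrow> 'a set) \<Rightarrow> 'a set \<Rightarrow> ('a \<Rightarrow> real) \<Rightarrow> bool"
  for v c B l rho where
  done_: "bfm_round v c B l rho [] S R p S R p"
| accept_stop:
    "\<lbrakk> j \<in> {1..l}; \<forall>i\<in>{1..l}. marg v u (S i) \<le> marg v u (S j);
       q = min (p u) (marg v u (S j) / (rho / B));
       c u \<le> q; v (insert u (S j)) > rho \<rbrakk>
     \<Longrightarrow> bfm_round v c B l rho (u # xs) S R p S R (p(u := q))"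
| accept_add:
    "\<lbrakk> j \<in> {1..l}; \<forall>i\<in>{1..l}. marg v u (S i) \<le> marg v u (S j);
       q = min (p u) (marg v u (S j) / (rho / B));
       c u \<le> q; \<not> v (insert u (S j)) > rho;
       bfm_round v c B l rho xs (S(j := insert u (S j))) R (p(u := q)) S' R' p' \<rbrakk>
     \<Longrightarrow> bfm_round v c B l rho (u # xs) S R p S' R' p'"
| reject:
    "\<lbrakk> j \<in> {1..l}; \<forall>i\<in>{1..l}. marg v u (S i) \<le> marg v u (S j);
       q = min (p u) (marg v u (S j) / (rho / B));
       \<not> c u \<le> q;
       bfm_round v c B l rho xs S (R - {u}) (p(u := q)) S' R' p' \<rbrakk>
     \<Longrightarrow> bfm_round v c B l rho (u # xs) S R p S' R' p'"

text \<open>Sellers accepting the initial offer B (step 1) and rho_1 (step 2).\<close>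
definition R0 :: "'a set \<Rightarrow> ('a \<Rightarrow> real) \<Rightarrow> real \<Rightarrow> 'a set" where
  "R0 N c B = {u \<in> N. c u \<le> B}"

definition rho1 :: "('a set \<Rightarrow> real) \<Rightarrow> 'a set \<Rightarrow> real" where
  "rho1 v R = Max ((\<lambda>u. v {u}) ` R)"

definition rho :: "real \<Rightarrow> real \<Rightarrow> nat \<Rightarrow> real" where
  "rho r1 \<alpha> t = \<alpha> ^ (t - 1) * r1"

text \<open>A complete (terminated) run of BFM-VM with truthful sellers.
  ord: the fixed processing order (a list enumerating N without repetitions).
  S t i = S_{i,t}; Rs t = R at the end of round t; ps t = prices at the end of round t;
  M = final round index; Sstar = output set.\<close>
definition bfm_vm_run ::
  "'a set \<Rightarrow> ('a set \<Rightarrow> real) \<Rightarrow> ('a \<Rightarrow> real) \<Rightarrow> real \<Rightarrow> real \<Rightarrow> nat \<Rightarrow> 'a list \<Rightarrow>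
   nat \<Rightarrow> (nat \<Rightarrow> nat \<Rightarrow> 'a set) \<Rightarrow> (nat \<Rightarrow> 'a set) \<Rightarrow> (nat \<Rightarrow> 'a \<Rightarrow> real) \<Rightarrow> 'a set \<Rightarrow> bool"
  where
  "bfm_vm_run N v c B \<alpha> l ord M S Rs ps Sstar \<longleftrightarrow>
     (let R_0 = R0 N c B; r1 = rho1 v R_0 in
      2 \<le> M \<and>
      Rs 1 = R_0 \<and> ps 1 = (\<lambda>_. B) \<and>
      (\<exists>u0\<in>R_0. v {u0} = r1 \<and> S 1 1 = {u0}) \<and>
      (l = 2 \<longrightarrow> S 1 2 = {}) \<and>
      (\<forall>t\<in>{2..M}.
         bfm_round v c B l (rho r1 \<alpha> t)
           (filter (\<lambda>u. u \<in> Rs (t - 1) \<and> u \<notin> (\<Union>i\<in>{1..l}. S (t - 1) i)) ord)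
           (\<lambda>_. {}) (Rs (t - 1)) (ps (t - 1)) (S t) (Rs t) (ps t)) \<and>
      (\<forall>t\<in>{2..<M}. Rs t - (\<Union>i\<in>{1..l}. S (t - 1) i \<union> S t i) \<noteq> {}) \<and>
      Rs M - (\<Union>i\<in>{1..l}. S (M - 1) i \<union> S M i) = {} \<and>
      (\<exists>i\<in>{1..l}. \<exists>t\<in>{M - 1, M}. Sstar = S t i) \<and>
      (\<forall>i\<in>{1..l}. \<forall>t\<in>{M - 1, M}. v (S t i) \<le> v Sstar))"

end

theory Submission
  imports Defs
begin

lemma round_props:
  assumes "bfm_round v c B l r xs S R p S' R' p'"
  shows "R' \<subseteq> R \<and> (\<forall>i. S i \<subseteq> S' i) \<and> (\<forall>i. S' i \<subseteq> S i \<union> set xs) \<and>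
    ((\<exists>u\<in>set xs. \<exists>j\<in>{1..l}. v (insert u (S' j)) > r) \<or>
     (\<forall>u\<in>set xs. u \<in> R' \<longrightarrow> (\<exists>i\<in>{1..l}. u \<in> S' i)))"
  using assms
proof (induction rule: bfm_round.induct)
  case (done_ S R p)
  then show ?case by simp
next
  case (accept_stop j u S p q xs R)
  then show ?case by auto
next
  case (accept_add j u S p q xs R S' R' p')
  have m: "\<forall>i. S i \<subseteq> S' i" using accept_add.IH
    by (metis fun_upd_apply subset_insertI subset_trans)
  have uS: "u \<in> S' j" using accept_add.IH by (metis fun_upd_same insert_subset)
  have s2: "\<forall>i. S' i \<subseteq> S i \<union> set (u # xs)" using accept_add.IH
    by (auto simp: fun_upd_apply split: if_splits) 
  show ?case using accept_add.IH m s2 uS accept_add.hyps(1) by auto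
next
  case (reject j u S p q xs R S' R' p')
  then show ?case by auto
qed


theorem lemma5p2:
  fixes N :: "'a set" and v :: "'a set \<Rightarrow> real" and c :: "'a \<Rightarrow> real"
    and B \<alpha> :: real and l M :: nat and ord :: "'a list"
    and S :: "nat \<Rightarrow> nat \<Rightarrow> 'a set" and Rs :: "nat \<Rightarrow> 'a set"
    and ps :: "nat \<Rightarrow> 'a \<Rightarrow> real" and Sstar :: "'a set"
  assumes "finite N"
    and "set ord = N" and "distinct ord"
    and "v {} = 0"
    and "\<forall>X\<subseteq>N. v X \<ge> 0"
    and "submodular_on N v"
    and "\<forall>u\<in>N. c u \<ge> 0"
    and "B > 0" and "\<alpha> > 1" and "l \<in> {1, 2}"
    and "R0 N c B \<noteq> {}"
    and "bfm_vm_run N v c B \<alpha> l ord M S Rs ps Sstar"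
  shows "v Sstar + rho (rho1 v (R0 N c B)) \<alpha> 1 \<ge> rho (rho1 v (R0 N c B)) \<alpha> (M - 1)
    \<and> \<alpha>\<^sup>2 / (\<alpha> - 1) * v Sstar \<ge> rho (rho1 v (R0 N c B)) \<alpha> M"
proof -
  define R00 where "R00 = R0 N c B"
  define r1 where "r1 = rho1 v R00"
  define L where "L = (\<lambda>t. filter (\<lambda>u. u \<in> Rs (t - 1) \<and> u \<notin> (\<Union>i\<in>{1..l}. S (t - 1) i)) ord)"
  have run: "2 \<le> M" "Rs 1 = R00"
      "(\<exists>u0\<in>R00. v {u0} = r1 \<and> S 1 1 = {u0})"
      "(l = 2 \<longrightarrow> S 1 2 = {})"
      "(\<forall>t\<in>{2..M}. bfm_round v c B l (rho r1 \<alpha> t) (L t)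
           (\<lambda>_. {}) (Rs (t - 1)) (ps (t - 1)) (S t) (Rs t) (ps t))"
      "(\<forall>t\<in>{2..<M}. Rs t - (\<Union>i\<in>{1..l}. S (t - 1) i \<union> S t i) \<noteq> {})"
      "(\<exists>i\<in>{1..l}. \<exists>t\<in>{M - 1, M}. Sstar = S t i)"
      "(\<forall>i\<in>{1..l}. \<forall>t\<in>{M - 1, M}. v (S t i) \<le> v Sstar)"
    using assms(12) unfolding bfm_vm_run_def Let_def R00_def r1_def L_def by auto
  have R00N: "R00 \<subseteq> N" unfolding R00_def R0_def by auto
  have finR: "finite R00" using R00N assms(1) finite_subset by blast
  obtain u0 where u0: "u0 \<in> R00" "v {u0} = r1" "S 1 1 = {u0}" using run(3) by blast
  have r1nn: "r1 \<ge> 0" using u0 R00N assms(5) by force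
  have maxr: "v {u} \<le> r1" if "u \<in> R00" for u
    unfolding r1_def rho1_def using finR that by (intro Max_ge) auto
  have RsR: "t \<ge> 1 \<Longrightarrow> t \<le> M \<Longrightarrow> Rs t \<subseteq> R00" for t
  proof (induction t)
    case 0 then show ?case by simp
  next
    case (Suc t)
    show ?case
    proof (cases "t = 0")
      case True then show ?thesis using run(2) by simp
    next
      case False
      have "Suc t \<in> {2..M}" using False Suc.prems by auto
      then have "Rs (Suc t) \<subseteq> Rs t" using run(5) round_props by fastforce
      then show ?thesis using Suc False by auto
    qed
  qed
  have LN: "set (L t) \<subseteq> N" for t unfolding L_def using assms(2) by auto
  have St: "t \<in> {2..M} \<Longrightarrow> S t i \<subseteq> N" for t i
    using run(5) round_props[of v c B l _ "L _" "\<lambda>_. {}"] LN by blast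
  have SstarN: "Sstar \<subseteq> N"
  proof -
    obtain i t where it: "i \<in> {1..l}" "t \<in> {M - 1, M}" "Sstar = S t i" using run(7) by blast
    show ?thesis
    proof (cases "t = 1")
      case True
      then have "i = 1 \<or> (i = 2 \<and> l = 2)" using it(1) assms(10) by auto
      then show ?thesis using True it u0 run(4) R00N by auto
    next
      case False
      then have "t \<in> {2..M}" using it(2) run(1) by auto
      then show ?thesis using St it by auto
    qed
  qed
  have vS0: "v Sstar \<ge> 0" using SstarN assms(5) by auto
  have claim1: "v Sstar + r1 \<ge> rho r1 \<alpha> (M - 1)"
  proof (cases "M = 2")
    case True
    then show ?thesis unfolding rho_def using vS0 by simp
  next
    case False
    define t where "t = M - 1"
    have t2: "t \<in> {2..<M}" "t \<in> {2..M}" using False run(1) unfolding t_def by auto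
    have rd: "bfm_round v c B l (rho r1 \<alpha> t) (L t) (\<lambda>_. {}) (Rs (t - 1)) (ps (t - 1)) (S t) (Rs t) (ps t)"
      using run(5) t2 by blast
    note rp = round_props[OF rd]
    have "\<exists>u\<in>set (L t). \<exists>j\<in>{1..l}. v (insert u (S t j)) > rho r1 \<alpha> t"
    proof (rule ccontr)
      assume "\<not> ?thesis"
      then have comp: "\<forall>u\<in>set (L t). u \<in> Rs t \<longrightarrow> (\<exists>i\<in>{1..l}. u \<in> S t i)" using rp by blast
      obtain u where u: "u \<in> Rs t" "u \<notin> (\<Union>i\<in>{1..l}. S (t - 1) i \<union> S t i)"
        using run(6) t2 by blast
      have "u \<in> Rs (t - 1)" using u rp by blast
      moreover have "t - 1 \<ge> 1" "t - 1 \<le> M" using t2 by auto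
      ultimately have "u \<in> N" using RsR R00N by blast
      then have "u \<in> set (L t)" unfolding L_def using assms(2) u \<open>u \<in> Rs (t - 1)\<close> by auto
      then show False using comp u by blast
    qed
    then obtain u j where uj: "u \<in> set (L t)" "j \<in> {1..l}" "v (insert u (S t j)) > rho r1 \<alpha> t"
      by blast
    have "t - 1 \<ge> 1" "t - 1 \<le> M" using t2 by auto
    then have "Rs (t - 1) \<subseteq> R00" using RsR by blast
    then have uR: "u \<in> R00" using uj(1) unfolding L_def by auto
    have uN: "u \<in> N" using uR R00N by auto
    have SN: "S t j \<subseteq> N" using St t2 by blast
    have "v (S t j) + r1 \<ge> rho r1 \<alpha> t"
    proof (cases "u \<in> S t j")
      case True
      then show ?thesis using uj(3) r1nn by (simp add: insert_absorb)
    next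
      case False
      have "marg v u (S t j) \<le> marg v u {}"
        using assms(6) SN uN False unfolding submodular_on_def by blast
      then show ?thesis using uj(3) maxr[OF uR] assms(4) unfolding marg_def by simp
    qed
    moreover have "v (S t j) \<le> v Sstar" using run(8) uj(2) unfolding t_def by blast
    ultimately show ?thesis unfolding t_def by simp
  qed
  have claim2: "\<alpha>\<^sup>2 / (\<alpha> - 1) * v Sstar \<ge> rho r1 \<alpha> M"
  proof (cases "M = 2")
    case True
    have "v (S 1 1) \<le> v Sstar" using run(8) True assms(10) by auto
    then have "v {u0} \<le> v Sstar" using u0 by simp
    then have vr: "r1 \<le> v Sstar" using u0 by simp
    have "rho r1 \<alpha> M = \<alpha> * r1" using True unfolding rho_def by simp
    also have "\<dots> \<le> \<alpha>\<^sup>2 / (\<alpha> - 1) * r1"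
    proof -
      have "\<alpha> \<le> \<alpha>\<^sup>2 / (\<alpha> - 1)" using assms(9)
        by (simp add: field_simps power2_eq_square)
      then show ?thesis using r1nn by (metis mult_right_mono)
    qed
    also have "\<dots> \<le> \<alpha>\<^sup>2 / (\<alpha> - 1) * v Sstar"
      using vr assms(9) by (intro mult_left_mono) auto
    finally show ?thesis .
  next
    case False
    then obtain k where k: "M = k + 3" using run(1) by (metis add.commute le_Suc_ex le_antisym numeral_3_eq_3 Suc_leI le_neq_implies_less numeral_2_eq_2 add_Suc_right)
    have c1: "v Sstar \<ge> \<alpha> ^ (k + 1) * r1 - r1" using claim1 k unfolding rho_def by simp
    have "rho r1 \<alpha> M = \<alpha> ^ (k + 2) * r1" using k unfolding rho_def by simp
    also have "\<dots> \<le> \<alpha>\<^sup>2 / (\<alpha> - 1) * (\<alpha> ^ (k + 1) * r1 - r1)"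
    proof -
      have a1: "\<alpha> ^ (k+1) \<ge> \<alpha>" using assms(9)
        by (metis le_add2 less_imp_le power_increasing power_one_right add.commute)
      have "(\<alpha> - 1) * (\<alpha> ^ (k + 2) * r1) \<le> \<alpha>\<^sup>2 * (\<alpha> ^ (k + 1) * r1 - r1)"
      proof -
        have "(\<alpha> - 1) * (\<alpha> ^ (k + 2) * r1) = \<alpha>\<^sup>2 * (\<alpha> ^ (k + 1) * r1) - \<alpha> ^ (k+2) * r1"
          by (simp add: algebra_simps power2_eq_square)
        moreover have "\<alpha> ^ (k+2) * r1 \<ge> \<alpha>\<^sup>2 * r1"
        proof -
          have "\<alpha> ^ (k+2) = \<alpha> * \<alpha> ^ (k+1)" by simp
          also have "\<dots> \<ge> \<alpha> * \<alpha>" using a1 assms(9) by simp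
          finally show ?thesis using r1nn by (simp add: power2_eq_square mult_right_mono)
        qed
        moreover have "\<alpha>\<^sup>2 * (\<alpha> ^ (k + 1) * r1 - r1) = \<alpha>\<^sup>2 * (\<alpha> ^ (k + 1) * r1) - \<alpha>\<^sup>2 * r1"
          by (simp add: right_diff_distrib)
        ultimately show ?thesis by linarith
      qed
      then show ?thesis using assms(9) by (simp add: field_simps)
    qed
    also have "\<dots> \<le> \<alpha>\<^sup>2 / (\<alpha> - 1) * v Sstar"
      using c1 assms(9) by (intro mult_left_mono) auto
    finally show ?thesis .
  qed
  show ?thesis using claim1 claim2 unfolding R00_def[symmetric] r1_def[symmetric]
    by (simp add: rho_def)
qed

end
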